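(* For all positive integers $n\geq 2$ and $t$, the domination number of the Sierpiński graph $S(K_n,t)$ is $$\gamma(S(K_n,t))=\left\lceil\frac{n^t}{n+1}\right\rceil.$$
   Context: For a positive integer $n$ let $[n]=\{1,\dots,n\}$. For positive integers $n,t$, the Sierpiński graph $S(K_n,t)$ is the simple graph with vertex set $[n]^t$ (words $v_1v_2\cdots v_t$ with $v_i\in[n]$), in which $u_1\cdots u_t$ and $v_1\cdots v_t$ are adjacent if and only if there is $s\in[t]$ with $u_j=v_j$ for all $j<s$, $u_s\neq v_s$, and $u_j=v_s$ and $v_j=u_s$ for all $j>s$. A set $D$ of vertices of a graph $G$ is dominating if every vertex of $G$ lies in $D$ or is adjacent to a vertex of $D$; the domination number $\gamma(G)$ is the minimum size of a dominating set. *)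

theory Defs
  imports Complex_Main
begin

text \<open>Vertices of the Sierpinski graph S(K_n,t): words of length t over [n] = {1..n},
  represented as lists (index i of the list = letter v_(i+1)).\<close>

definition sierp_vertices :: "nat \<Rightarrow> nat \<Rightarrow> nat list set" where
  "sierp_vertices n t = {v. length v = t \<and> set v \<subseteq> {1..n}}"

definition sierp_adj :: "nat \<Rightarrow> nat \<Rightarrow> nat list \<Rightarrow> nat list \<Rightarrow> bool" where
  "sierp_adj n t u v \<longleftrightarrow> u \<in> sierp_vertices n t \<and> v \<in> sierp_vertices n t \<and>
     (\<exists>s<t. (\<forall>j<s. u ! j = v ! j) \<and> u ! s \<noteq> v ! s \<and>
            (\<forall>j. s < j \<and> j < t \<longrightarrow> u ! j = v ! s \<and> v ! j = u ! s))"

definition dominating :: "'a set \<Rightarrow> ('a \<Rightarrow> 'a \<Rightarrow> bool) \<Rightarrow> 'a set \<Rightarrow> bool" where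
  "dominating V E D \<longleftrightarrow> D \<subseteq> V \<and> (\<forall>x\<in>V. x \<in> D \<or> (\<exists>d\<in>D. E x d))"

definition domination_number :: "'a set \<Rightarrow> ('a \<Rightarrow> 'a \<Rightarrow> bool) \<Rightarrow> nat" where
  "domination_number V E = (LEAST k. \<exists>D. dominating V E D \<and> finite D \<and> card D = k)"

end

theory Submission
  imports Defs
begin

lemma V_fin: "finite (sierp_vertices n t)"
proof -
  have "sierp_vertices n t = {xs. set xs \<subseteq> {1..n} \<and> length xs = t}"
    by (auto simp: sierp_vertices_def)
  thus ?thesis using finite_lists_length_eq[of "{1..n}" t] by simp
qed

lemma V_card: "card (sierp_vertices n t) = n ^ t"
proof -
  have "sierp_vertices n t = {xs. set xs \<subseteq> {1..n} \<and> length xs = t}"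
    by (auto simp: sierp_vertices_def)
  thus ?thesis using card_lists_length_eq[of "{1..n}" t] by simp
qed

lemma V_Cons: "(i # x \<in> sierp_vertices n (Suc t)) \<longleftrightarrow> i \<in> {1..n} \<and> x \<in> sierp_vertices n t"
  by (auto simp: sierp_vertices_def)

lemma V_0: "sierp_vertices n 0 = {[]}"
  by (auto simp: sierp_vertices_def)

lemma V_Suc: "sierp_vertices n (Suc t) = (\<Union>i\<in>{1..n}. Cons i ` sierp_vertices n t)"
  by (auto simp: sierp_vertices_def length_Suc_conv)

lemma adj_cons:
  assumes "sierp_adj n t x y" "i \<in> {1..n}"
  shows "sierp_adj n (Suc t) (i#x) (i#y)"
proof -
  from assms(1) have xv: "x \<in> sierp_vertices n t" "y \<in> sierp_vertices n t"
    and "\<exists>s<t. (\<forall>j<s. x ! j = y ! j) \<and> x ! s \<noteq> y ! s \<and>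
            (\<forall>j. s < j \<and> j < t \<longrightarrow> x ! j = y ! s \<and> y ! j = x ! s)"
    unfolding sierp_adj_def by blast+
  then obtain s where s: "s<t" "\<forall>j<s. x!j=y!j" "x!s\<noteq>y!s"
     "\<forall>j. s<j \<and> j<t \<longrightarrow> x!j=y!s \<and> y!j=x!s" by blast
  have a: "\<forall>j<Suc s. (i#x)!j = (i#y)!j"
  proof (intro allI impI)
    fix j assume j: "j<Suc s" show "(i#x)!j = (i#y)!j"
    proof (cases j)
      case 0 then show ?thesis by simp
    next
      case (Suc k) then have "k<s" using j by simp
      then have "x!k = y!k" using s(2) by blast
      then show ?thesis using Suc by simp
    qed
  qed
  have b: "\<forall>j. Suc s < j \<and> j < Suc t \<longrightarrow> (i#x)!j = (i#y)!(Suc s) \<and> (i#y)!j = (i#x)!(Suc s)"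
  proof (intro allI impI)
    fix j assume j: "Suc s < j \<and> j < Suc t"
    then obtain k where k: "j = Suc k" "s < k" "k < t" by (cases j) auto
    then have "x!k=y!s \<and> y!k=x!s" using s(4) by blast
    then show "(i#x)!j = (i#y)!(Suc s) \<and> (i#y)!j = (i#x)!(Suc s)" using k by simp
  qed
  have c: "(i#x)!(Suc s) \<noteq> (i#y)!(Suc s)" using s(3) by simp
  have v: "i#x \<in> sierp_vertices n (Suc t)" "i#y \<in> sierp_vertices n (Suc t)"
    using xv assms(2) by (simp_all add: V_Cons)
  have "Suc s < Suc t" using s(1) by simp
  then show ?thesis unfolding sierp_adj_def
    using a b c v by blast
qed

lemma adj_bridge:
  assumes "i \<noteq> j" "i \<in> {1..n}" "j \<in> {1..n}"
  shows "sierp_adj n (Suc t) (i # replicate t j) (j # replicate t i)"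
proof -
  have b: "\<forall>k. 0 < k \<and> k < Suc t \<longrightarrow> (i # replicate t j)!k = (j # replicate t i)!0 \<and>
     (j # replicate t i)!k = (i # replicate t j)!0"
  proof (intro allI impI)
    fix k assume "0 < k \<and> k < Suc t"
    then show "(i # replicate t j)!k = (j # replicate t i)!0 \<and>
     (j # replicate t i)!k = (i # replicate t j)!0" by (cases k) auto
  qed
  have v: "i # replicate t j \<in> sierp_vertices n (Suc t)" "j # replicate t i \<in> sierp_vertices n (Suc t)"
    using assms by (auto simp: sierp_vertices_def)
  have a: "\<forall>k<0. (i # replicate t j)!k = (j # replicate t i)!k" by simp
  have c: "(i # replicate t j)!0 \<noteq> (j # replicate t i)!0" using assms(1) by simp
  have "(0::nat) < Suc t" by simp
  then show ?thesis unfolding sierp_adj_def using a b c v by blast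
qed

fun cw :: "nat option \<Rightarrow> nat list \<Rightarrow> bool" where
  "cw None [] = True"
| "cw (Some a) [] = False"
| "cw None (i#w) = cw (Some i) w"
| "cw (Some a) (i#w) = (if i = a then cw None w else cw (Some a) w)"

fun stp :: "nat option \<Rightarrow> nat \<Rightarrow> nat option" where
  "stp None i = Some i"
| "stp (Some a) i = (if i = a then None else Some a)"

lemma cw_Cons: "cw p (i#w) = cw (stp p i) w"
  by (cases p) auto

lemma cw_rep: "cw None (replicate t b) = even t \<and> cw (Some b) (replicate t b) = odd t"
proof (induction t)
  case 0 show ?case by simp
next
  case (Suc t) then show ?case by simp
qed

lemma cw_rep2: "a \<noteq> b \<Longrightarrow> \<not> cw (Some a) (replicate t b)"
  by (induction t) simp_all

lemma dom_aux:
  assumes "v \<in> sierp_vertices n t" "\<forall>a. p = Some a \<longrightarrow> a \<in> {1..n}"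
  shows "cw p v \<or> (\<exists>u. sierp_adj n t v u \<and> cw p u) \<or>
     (\<exists>b. v = replicate t b \<and> ((p = None \<and> odd t) \<or> (p = Some b \<and> even t)))"
  using assms
proof (induction t arbitrary: v p)
  case 0
  then have v: "v = []" by (simp add: V_0)
  show ?case
  proof (cases p)
    case None then show ?thesis using v by simp
  next
    case (Some a) then show ?thesis using v by (intro disjI2 exI[of _ a]) simp
  qed
next
  case (Suc t)
  from Suc.prems(1) obtain i w where v: "v = i#w" and i: "i \<in> {1..n}" and w: "w \<in> sierp_vertices n t"
    by (cases v) (auto simp: V_Cons sierp_vertices_def)
  have p': "\<forall>a. stp p i = Some a \<longrightarrow> a \<in> {1..n}" using Suc.prems(2) i by (cases p) auto
  from Suc.IH[OF w p'] consider (c) "cw (stp p i) w" | (d) u where "sierp_adj n t w u" "cw (stp p i) u"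
    | (e) b where "w = replicate t b" "(stp p i = None \<and> odd t) \<or> (stp p i = Some b \<and> even t)"
    by blast
  then show ?case
  proof cases
    case c then show ?thesis using v by (simp add: cw_Cons)
  next
    case d
    have "sierp_adj n (Suc t) v (i#u)" using adj_cons[OF d(1) i] v by simp
    moreover have "cw p (i#u)" using d(2) by (simp add: cw_Cons)
    ultimately show ?thesis by blast
  next
    case e
    show ?thesis
    proof (cases "stp p i = None")
      case True
      then have pi: "p = Some i" by (cases p) (auto split: if_splits)
      have ot: "odd t" using e(2) True by simp
      then have b: "b \<in> {1..n}" using w e(1) by (cases t) (auto simp: sierp_vertices_def)
      show ?thesis
      proof (cases "b = i")
        case True then have "v = replicate (Suc t) i" using v e(1) by simp
        then show ?thesis using pi ot by auto
      next
        case False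
        have "sierp_adj n (Suc t) v (b # replicate t i)"
          using adj_bridge[OF _ i b, of t] False v e(1) by auto
        moreover have "cw p (b # replicate t i)" using pi False ot cw_rep[of t i] by simp
        ultimately show ?thesis by blast
      qed
    next
      case False
      then have sb: "stp p i = Some b" and et: "even t" using e(2) by auto
      show ?thesis
      proof (cases p)
        case None
        then have "i = b" using sb by simp
        then have "v = replicate (Suc t) b" using v e(1) by simp
        then show ?thesis using None et by auto
      next
        case (Some a)
        then have ia: "i \<noteq> a" "b = a" using sb by (auto split: if_splits)
        have a: "a \<in> {1..n}" using Suc.prems(2) Some by simp
        have "sierp_adj n (Suc t) v (a # replicate t i)"
          using adj_bridge[OF ia(1) i a, of t] v e(1) ia by simp
        moreover have "cw p (a # replicate t i)" using Some et cw_rep[of t i] by simp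
        ultimately show ?thesis by blast
      qed
    qed
  qed
qed

lemma split_set: "{w \<in> sierp_vertices n (Suc t). cw p w} =
   (\<Union>i\<in>{1..n}. Cons i ` {w \<in> sierp_vertices n t. cw (stp p i) w})"
  by (auto simp: V_Suc cw_Cons)

lemma card_step: "card {w \<in> sierp_vertices n (Suc t). cw p w} =
   (\<Sum>i\<in>{1..n}. card {w \<in> sierp_vertices n t. cw (stp p i) w})"
proof -
  have f: "\<And>i. finite (Cons i ` {w \<in> sierp_vertices n t. cw (stp p i) w})"
    using V_fin by simp
  have "card (\<Union>i\<in>{1..n}. Cons i ` {w \<in> sierp_vertices n t. cw (stp p i) w}) =
     (\<Sum>i\<in>{1..n}. card (Cons i ` {w \<in> sierp_vertices n t. cw (stp p i) w}))"
    by (rule card_UN_disjoint) (use f in auto)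
  also have "\<dots> = (\<Sum>i\<in>{1..n}. card {w \<in> sierp_vertices n t. cw (stp p i) w})"
    by (rule sum.cong) (auto simp: card_image)
  finally show ?thesis by (simp add: split_set)
qed

lemma cnt: "int (card {w \<in> sierp_vertices n t. cw None w}) * (int n + 1) = int n ^ t + int n * (-1)^t \<and>
  (\<forall>a\<in>{1..n}. int (card {w \<in> sierp_vertices n t. cw (Some a) w}) * (int n + 1) = int n ^ t - (-1)^t)"
proof (induction t)
  case 0
  have "{w \<in> sierp_vertices n 0. cw None w} = {[]}" "\<And>a. {w \<in> sierp_vertices n 0. cw (Some a) w} = {}"
    by (auto simp: V_0)
  then show ?case by (simp only:) simp
next
  case (Suc t)
  define cN where "cN = int (card {w \<in> sierp_vertices n t. cw None w})"
  define cS where "cS a = int (card {w \<in> sierp_vertices n t. cw (Some a) w})" for a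
  have IHN: "cN * (int n + 1) = int n ^ t + int n * (-1)^t" using Suc cN_def by simp
  have IHS: "\<And>a. a \<in> {1..n} \<Longrightarrow> cS a * (int n + 1) = int n ^ t - (-1)^t" using Suc cS_def by simp
  have N: "int (card {w \<in> sierp_vertices n (Suc t). cw None w}) = (\<Sum>i\<in>{1..n}. cS i)"
    by (simp add: card_step cS_def)
  have "(\<Sum>i\<in>{1..n}. cS i) * (int n + 1) = (\<Sum>i\<in>{1..n}. cS i * (int n + 1))"
    by (simp add: sum_distrib_right)
  also have "\<dots> = (\<Sum>i\<in>{1..n}. int n ^ t - (-1)^t)" by (rule sum.cong) (auto simp: IHS)
  also have "\<dots> = int n ^ Suc t + int n * (-1) ^ Suc t" by (simp add: algebra_simps)
  finally have A: "int (card {w \<in> sierp_vertices n (Suc t). cw None w}) * (int n + 1) = int n ^ Suc t + int n * (-1) ^ Suc t"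
    using N by simp
  have B: "int (card {w \<in> sierp_vertices n (Suc t). cw (Some a) w}) * (int n + 1) = int n ^ Suc t - (-1) ^ Suc t"
    if a: "a \<in> {1..n}" for a
  proof -
    have "int (card {w \<in> sierp_vertices n (Suc t). cw (Some a) w}) =
       (\<Sum>i\<in>{1..n}. (if i = a then cN else cS a))"
      unfolding card_step of_nat_sum by (rule sum.cong) (auto simp: cS_def cN_def)
    also have "\<dots> = cN + (\<Sum>i\<in>{1..n} - {a}. (if i = a then cN else cS a))"
      using sum.remove[of "{1..n}" a "\<lambda>i. if i = a then cN else cS a"] a by simp
    also have "(\<Sum>i\<in>{1..n} - {a}. (if i = a then cN else cS a)) = (\<Sum>i\<in>{1..n} - {a}. cS a)"
      by (rule sum.cong) auto
    also have "\<dots> = (int n - 1) * cS a" using a by (simp add: of_nat_diff)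
    finally have E: "int (card {w \<in> sierp_vertices n (Suc t). cw (Some a) w}) = cN + (int n - 1) * cS a" .
    have "(cN + (int n - 1) * cS a) * (int n + 1) = cN * (int n + 1) + (int n - 1) * (cS a * (int n + 1))"
      by (simp add: algebra_simps)
    also have "\<dots> = (int n ^ t + int n * (-1)^t) + (int n - 1) * (int n ^ t - (-1)^t)"
      by (simp only: IHN IHS[OF a])
    also have "\<dots> = int n ^ Suc t - (-1) ^ Suc t" by (simp add: algebra_simps)
    finally show ?thesis using E by simp
  qed
  show ?case using A B by blast
qed

lemma nbr_card:
  assumes d: "d \<in> sierp_vertices n t" and t: "t = Suc m"
  shows "card {x. sierp_adj n t x d} \<le> n"
proof -
  define A where "A = (\<lambda>c. take m d @ [c]) ` ({1..n} - {d!m})"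
  define S where "S = {s. s < m \<and> d!s \<noteq> d!m \<and> (\<forall>j. s<j \<and> j<t \<longrightarrow> d!j = d!m)}"
  define g where "g s = take s d @ (d!m) # replicate (m - s) (d!s)" for s
  have ld: "length d = Suc m" and sd: "set d \<subseteq> {1..n}" using d t by (auto simp: sierp_vertices_def)
  have dm: "d!m \<in> {1..n}" using sd ld by (metis lessI nth_mem subsetD)
  have sub: "{x. sierp_adj n t x d} \<subseteq> A \<union> g ` S"
  proof
    fix x assume "x \<in> {x. sierp_adj n t x d}"
    then have xv: "x \<in> sierp_vertices n t" and "\<exists>s<t. (\<forall>j<s. x!j = d!j) \<and> x!s \<noteq> d!s \<and>
        (\<forall>j. s<j \<and> j<t \<longrightarrow> x!j = d!s \<and> d!j = x!s)"
      unfolding sierp_adj_def by blast+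
    then obtain s where s: "s<t" "\<forall>j<s. x!j = d!j" "x!s \<noteq> d!s"
        "\<forall>j. s<j \<and> j<t \<longrightarrow> x!j = d!s \<and> d!j = x!s" by blast
    have lx: "length x = Suc m" "set x \<subseteq> {1..n}" using xv t by (auto simp: sierp_vertices_def)
    show "x \<in> A \<union> g ` S"
    proof (cases "s = m")
      case True
      have "x = take m d @ [x!m]"
      proof (rule nth_equalityI)
        show "length x = length (take m d @ [x!m])" using lx ld by simp
        fix k assume "k < length x"
        then have "k < m \<or> k = m" using lx by auto
        then show "x!k = (take m d @ [x!m])!k"
        proof
          assume k: "k<m" then have "x!k = d!k" using s(2) True by blast
          then show ?thesis using k ld by (simp add: nth_append)
        next
          assume "k = m" then show ?thesis using ld by (simp add: nth_append)
        qed
      qed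
      moreover have "x!m \<in> {1..n} - {d!m}" using lx s(3) True by (metis Diff_iff lessI nth_mem singletonD subsetD)
      ultimately show ?thesis unfolding A_def by blast
    next
      case False
      then have sm: "s < m" using s(1) t by simp
      have "m < t" using t by simp
      then have xs: "x!s = d!m" using s(4) sm by metis
      have "\<forall>j. s<j \<and> j<t \<longrightarrow> d!j = d!m" using s(4) xs by metis
      then have "s \<in> S" unfolding S_def using sm s(3) xs by simp
      have "x = g s"
      proof (rule nth_equalityI)
        show "length x = length (g s)" using lx ld sm by (simp add: g_def)
        fix k assume k: "k < length x"
        consider "k < s" | "k = s" | "s < k" by linarith
        then show "x!k = g s ! k"
        proof cases
          case 1 then show ?thesis using s(2) ld sm by (simp add: g_def nth_append)
        next
          case 2 then show ?thesis using xs ld sm by (simp add: g_def nth_append)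
        next
          case 3
          have "k < t" using k lx t by simp
          then have "x!k = d!s" using s(4) 3 by blast
          moreover have "g s ! k = d!s" using 3 k lx ld sm by (simp add: g_def nth_append nth_Cons')
          ultimately show ?thesis by simp
        qed
      qed
      then show ?thesis using \<open>s\<in>S\<close> by blast
    qed
  qed
  have fA: "finite A" unfolding A_def by simp
  have cA: "card A \<le> n - 1"
  proof -
    have "card A \<le> card ({1..n} - {d!m})" unfolding A_def by (rule card_image_le) simp
    also have "\<dots> = n - 1" using dm by (simp add: card_Diff_singleton)
    finally show ?thesis .
  qed
  have fS: "finite S" by (rule finite_subset[of _ "{..<m}"]) (auto simp: S_def)
  have "\<forall>a1\<in>S. \<forall>a2\<in>S. a1 = a2"
  proof (intro ballI)
    fix a1 a2 assume a: "a1 \<in> S" "a2 \<in> S"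
    show "a1 = a2"
    proof (rule ccontr)
      assume "a1 \<noteq> a2"
      then consider "a1 < a2" | "a2 < a1" by linarith
      then show False
      proof cases
        case 1
        have h1: "a2 < m" "d!a2 \<noteq> d!m" using a(2) unfolding S_def by simp_all
        have h2: "\<forall>j. a1<j \<and> j<t \<longrightarrow> d!j = d!m" using a(1) unfolding S_def by simp
        have "a2 < t" using h1 t by simp
        then have "d!a2 = d!m" using h2 1 by blast
        then show False using h1 by simp
      next
        case 2
        have h1: "a1 < m" "d!a1 \<noteq> d!m" using a(1) unfolding S_def by simp_all
        have h2: "\<forall>j. a2<j \<and> j<t \<longrightarrow> d!j = d!m" using a(2) unfolding S_def by simp
        have "a1 < t" using h1 t by simp
        then have "d!a1 = d!m" using h2 2 by blast
        then show False using h1 by simp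
      qed
    qed
  qed
  then have cS: "card S \<le> 1" using card_le_Suc0_iff_eq[OF fS] by simp
  have "card (g ` S) \<le> 1" using card_image_le[OF fS, of g] cS by simp
  have "card {x. sierp_adj n t x d} \<le> card (A \<union> g ` S)"
    by (rule card_mono) (use fA fS sub in auto)
  also have "\<dots> \<le> card A + card (g ` S)" by (rule card_Un_le)
  also have "\<dots> \<le> n"
  proof -
    have "n \<ge> 1" using dm by simp
    then show ?thesis using cA \<open>card (g ` S) \<le> 1\<close> by linarith
  qed
  finally show ?thesis .
qed

lemma lower:
  assumes dom: "dominating (sierp_vertices n t) (sierp_adj n t) D" and fD: "finite D" and t: "t \<ge> 1"
  shows "n ^ t \<le> (n + 1) * card D"
proof -
  obtain m where tm: "t = Suc m" using t by (cases t) auto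
  let ?V = "sierp_vertices n t"
  have DV: "D \<subseteq> ?V" using dom by (simp add: dominating_def)
  have cov: "?V \<subseteq> (\<Union>d\<in>D. insert d {x. sierp_adj n t x d})"
    using dom unfolding dominating_def by blast
  have "n ^ t = card ?V" by (simp add: V_card)
  also have "\<dots> \<le> card (\<Union>d\<in>D. insert d {x. sierp_adj n t x d})"
  proof (rule card_mono[OF _ cov])
    have "\<And>d. finite {x. sierp_adj n t x d}"
      by (rule finite_subset[OF _ V_fin[of n t]]) (auto simp: sierp_adj_def)
    then show "finite (\<Union>d\<in>D. insert d {x. sierp_adj n t x d})" using fD by blast
  qed
  also have "\<dots> \<le> (\<Sum>d\<in>D. card (insert d {x. sierp_adj n t x d}))" by (rule card_UN_le[OF fD])
  also have "\<dots> \<le> (\<Sum>d\<in>D. n + 1)"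
  proof (rule sum_mono)
    fix d assume "d \<in> D"
    then have dv: "d \<in> ?V" using DV by blast
    have fin: "finite {x. sierp_adj n t x d}"
      by (rule finite_subset[OF _ V_fin[of n t]]) (auto simp: sierp_adj_def)
    have "card (insert d {x. sierp_adj n t x d}) \<le> Suc (card {x. sierp_adj n t x d})"
      using fin by (simp add: card_insert_if)
    then show "card (insert d {x. sierp_adj n t x d}) \<le> n + 1" using nbr_card[OF dv tm] by simp
  qed
  also have "\<dots> = (n + 1) * card D" by simp
  finally show ?thesis .
qed

lemma ceil_help:
  fixes N a :: real and k :: int
  assumes "a > 0" "N \<le> of_int k * (a + 1)" "of_int k * (a + 1) \<le> N + a"
  shows "ceiling (N / (a + 1)) = k"
proof (rule ceiling_unique)
  have p: "a + 1 > 0" using assms(1) by simp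
  show "N / (a + 1) \<le> of_int k" using assms(2) p by (simp add: divide_le_eq)
  have "(of_int k - 1) * (a + 1) < N" using assms(3) by (simp add: algebra_simps)
  then show "of_int k - 1 < N / (a + 1)" using p by (simp add: less_divide_eq)
qed

theorem theorem3p1:
  fixes n t :: nat
  assumes "n \<ge> 2" and "t \<ge> 1"
  shows "int (domination_number (sierp_vertices n t) (sierp_adj n t))
           = ceiling (real n ^ t / (real n + 1))"
proof -
  let ?V = "sierp_vertices n t"
  define p where "p = (if even t then None else Some (1::nat))"
  define D0 where "D0 = {w \<in> ?V. cw p w}"
  have pn: "\<forall>a. p = Some a \<longrightarrow> a \<in> {1..n}" using assms(1) by (simp add: p_def)
  have dom0: "dominating ?V (sierp_adj n t) D0"
    unfolding dominating_def
  proof (intro conjI ballI)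
    show "D0 \<subseteq> ?V" by (auto simp: D0_def)
    fix x assume x: "x \<in> ?V"
    from dom_aux[OF x pn] consider "cw p x" | u where "sierp_adj n t x u" "cw p u"
      | b where "(p = None \<and> odd t) \<or> (p = Some b \<and> even t)" by blast
    then show "x \<in> D0 \<or> (\<exists>d\<in>D0. sierp_adj n t x d)"
    proof cases
      case 1 then show ?thesis using x by (simp add: D0_def)
    next
      case 2 then show ?thesis by (auto simp: D0_def sierp_adj_def)
    next
      case 3 then show ?thesis by (auto simp: p_def split: if_splits)
    qed
  qed
  have fD0: "finite D0" using V_fin[of n t] by (simp add: D0_def)
  have cnt0: "int (card D0) * (int n + 1) = int n ^ t + (if even t then int n else 1)"
    using cnt[of n t] assms(1) by (auto simp: D0_def p_def)
  have ceq: "ceiling (real n ^ t / (real n + 1)) = int (card D0)"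
  proof (rule ceil_help)
    have r: "real (card D0) * (real n + 1) = real n ^ t + (if even t then real n else 1)"
    proof -
      have "real_of_int (int (card D0) * (int n + 1)) = real_of_int (int n ^ t + (if even t then int n else 1))"
        using cnt0 by simp
      then show ?thesis by simp
    qed
    show "real n > 0" using assms(1) by simp
    show "real n ^ t \<le> real_of_int (int (card D0)) * (real n + 1)" using r by (simp split: if_splits)
    show "real_of_int (int (card D0)) * (real n + 1) \<le> real n ^ t + real n"
      using r assms(1) by (simp split: if_splits)
  qed
  have "domination_number ?V (sierp_adj n t) = card D0"
    unfolding domination_number_def
  proof (rule Least_equality)
    show "\<exists>D. dominating ?V (sierp_adj n t) D \<and> finite D \<and> card D = card D0"
      using dom0 fD0 by blast
  next
    fix k assume "\<exists>D. dominating ?V (sierp_adj n t) D \<and> finite D \<and> card D = k"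
    then obtain D where D: "dominating ?V (sierp_adj n t) D" "finite D" "card D = k" by blast
    have "n ^ t \<le> (n + 1) * card D" using lower[OF D(1,2) assms(2)] .
    then have "real n ^ t \<le> (real n + 1) * real (card D)"
      by (metis of_nat_1 of_nat_add of_nat_le_iff of_nat_mult of_nat_power)
    then have "real n ^ t / (real n + 1) \<le> real_of_int (int (card D))"
      by (simp add: divide_le_eq mult.commute add_pos_pos)
    then have "ceiling (real n ^ t / (real n + 1)) \<le> int (card D)" by (rule ceiling_le)
    then show "card D0 \<le> k" using ceq D(3) by simp
  qed
  then show ?thesis using ceq by simp
qed

end
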